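(* Let $\mathcal B=(B_1,\dots,B_d)$ be a splitting of order $d$ of $B_J\in\mathbb R^{n\times n}$. Then: if $\|B_J\|_\infty\le1$, then $\|T(\mathcal B)\|_\infty=\|B_J\|_\infty$; if $\|B_J\|_\infty>1$, then $\|B_J\|_\infty\le\|T(\mathcal B)\|_\infty\le\|B_J\|_\infty^d$.
   Context: For $B\in\mathbb R^{n\times n}$, a splitting of $B$ of order $d\ge1$ is an ordered $d$-tuple $\mathcal B=(B_1,\dots,B_d)$ of real $n\times n$ matrices with $B_p\neq O$ for all $p$, $\sum_{p=1}^d B_p=B$, and $B_p\circ B_q=O$ (Hadamard product) for $p\ne q$. The iteration matrix of $\mathcal B$ is the $dn\times dn$ matrix $T(\mathcal B)=(I_{dn}-\mathcal L)^{-1}\mathcal U$, where $\mathcal L,\mathcal U$ are $d\times d$ block matrices with $n\times n$ blocks, $\mathcal L_{ij}=B_j$ if $i>j$ and $O$ otherwise, $\mathcal U_{ij}=B_j$ if $i\le j$ and $O$ otherwise. $\|\cdot\|_\infty$ is the maximum-row-sum matrix norm. *)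

theory Defs
  imports "Jordan_Normal_Form.Matrix"
begin

(* Splittings are indexed p = 0..d-1 (paper: 1..d). *)
definition is_splitting :: "nat \<Rightarrow> nat \<Rightarrow> (nat \<Rightarrow> real mat) \<Rightarrow> real mat \<Rightarrow> bool" where
  "is_splitting n d B BJ \<longleftrightarrow>
     d \<ge> 1 \<and> BJ \<in> carrier_mat n n \<and>
     (\<forall>p<d. B p \<in> carrier_mat n n \<and> B p \<noteq> 0\<^sub>m n n) \<and>
     (\<forall>i<n. \<forall>j<n. BJ $$ (i,j) = (\<Sum>p<d. B p $$ (i,j))) \<and>
     (\<forall>p<d. \<forall>q<d. p \<noteq> q \<longrightarrow> (\<forall>i<n. \<forall>j<n. B p $$ (i,j) * B q $$ (i,j) = 0))"

(* block (i,j) of a (d n) x (d n) matrix occupies rows i*n..i*n+n-1, columns j*n..j*n+n-1 *)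
definition block_L :: "nat \<Rightarrow> nat \<Rightarrow> (nat \<Rightarrow> real mat) \<Rightarrow> real mat" where
  "block_L n d B = mat (d*n) (d*n) (\<lambda>(r,c). if r div n > c div n then B (c div n) $$ (r mod n, c mod n) else 0)"

definition block_U :: "nat \<Rightarrow> nat \<Rightarrow> (nat \<Rightarrow> real mat) \<Rightarrow> real mat" where
  "block_U n d B = mat (d*n) (d*n) (\<lambda>(r,c). if r div n \<le> c div n then B (c div n) $$ (r mod n, c mod n) else 0)"

definition mat_inv :: "nat \<Rightarrow> real mat \<Rightarrow> real mat" where
  "mat_inv N A = (SOME X. X \<in> carrier_mat N N \<and> inverts_mat A X \<and> inverts_mat X A)"

definition iter_mat :: "nat \<Rightarrow> nat \<Rightarrow> (nat \<Rightarrow> real mat) \<Rightarrow> real mat" where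
  "iter_mat n d B = mat_inv (d*n) (1\<^sub>m (d*n) - block_L n d B) * block_U n d B"

definition norm_inf :: "real mat \<Rightarrow> real" where
  "norm_inf A = Max ((\<lambda>i. \<Sum>j<dim_col A. \<bar>A $$ (i,j)\<bar>) ` {..<dim_row A})"

end

theory Submission imports Defs "Jordan_Normal_Form.Determinant" begin

lemma sum_blocks: "(\<Sum>c<d*n. f c) = (\<Sum>p<d. \<Sum>j<n. f (p*n+j::nat)::real)"
proof (induction d)
  case 0 then show ?case by simp
next
  case (Suc d)
  have "{..<Suc d * n} = {..<d*n} \<union> {d*n..<d*n+n}" by auto
  then have "(\<Sum>c<Suc d*n. f c) = (\<Sum>c<d*n. f c) + (\<Sum>c\<in>{d*n..<d*n+n}. f c)"
    by (simp add: sum.union_disjoint ivl_disj_int)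
  also have "(\<Sum>c\<in>{d*n..<d*n+n}. f c) = (\<Sum>j<n. f (d*n+j))"
    by (simp add: sum.atLeastLessThan_shift_bounds lessThan_atLeast0 add.commute[of "d*n"] sum.shift_bounds_nat_ivl[symmetric])
  finally show ?case using Suc by simp
qed

lemma sum_abs_disj:
  fixes x :: "nat \<Rightarrow> real"
  assumes "\<And>p q. p < d \<Longrightarrow> q < d \<Longrightarrow> p \<noteq> q \<Longrightarrow> x p * x q = 0"
  shows "(\<Sum>p<d. \<bar>x p\<bar>) = \<bar>\<Sum>p<d. x p\<bar>"
proof (cases "\<exists>p0<d. x p0 \<noteq> 0")
  case True
  then obtain p0 where p0: "p0 < d" "x p0 \<noteq> 0" by auto
  have z: "x p = 0" if "p < d" "p \<noteq> p0" for p
    using assms[OF that(1) p0(1) that(2)] p0 by simp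
  have "(\<Sum>p<d. x p) = (\<Sum>p<d. if p = p0 then x p0 else 0)"
    by (rule sum.cong) (auto simp: z)
  moreover have "(\<Sum>p<d. \<bar>x p\<bar>) = (\<Sum>p<d. if p = p0 then \<bar>x p0\<bar> else 0)"
    by (rule sum.cong) (auto simp: z)
  ultimately show ?thesis using p0 by simp
next
  case False then show ?thesis by simp
qed

theorem proposition4p1:
  fixes n d :: nat and B :: "nat \<Rightarrow> real mat" and BJ :: "real mat"
  assumes "is_splitting n d B BJ"
  shows "(norm_inf BJ \<le> 1 \<longrightarrow> norm_inf (iter_mat n d B) = norm_inf BJ) \<and>
         (norm_inf BJ > 1 \<longrightarrow> norm_inf BJ \<le> norm_inf (iter_mat n d B) \<and>
                                norm_inf (iter_mat n d B) \<le> norm_inf BJ ^ d)"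
proof -
  note S = assms[unfolded is_splitting_def]
  have d1: "d \<ge> 1" and BJc: "BJ \<in> carrier_mat n n" using S by auto
  have Bc: "\<And>p. p < d \<Longrightarrow> B p \<in> carrier_mat n n" using S by auto
  have BJs: "\<And>i j. i<n \<Longrightarrow> j<n \<Longrightarrow> BJ $$ (i,j) = (\<Sum>p<d. B p $$ (i,j))" using S by auto
  have dis: "\<And>p q i j. p<d \<Longrightarrow> q<d \<Longrightarrow> p\<noteq>q \<Longrightarrow> i<n \<Longrightarrow> j<n \<Longrightarrow> B p $$ (i,j) * B q $$ (i,j) = 0"
    using S by auto
  have n0: "n > 0"
  proof (rule ccontr)
    assume "\<not> n > 0"
    then have "n = 0" by simp
    moreover have "B 0 \<noteq> 0\<^sub>m n n" "B 0 \<in> carrier_mat n n" using S d1 by auto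
    ultimately show False by (metis carrier_matD(1,2) eq_matI less_nat_zero_code zero_carrier_mat carrier_matD)
  qed
  define N where "N = d*n"
  have N0: "N > 0" using n0 d1 N_def by simp
  define L where "L = block_L n d B"
  define U where "U = block_U n d B"
  define A where "A = 1\<^sub>m N - L"
  have Lc: "L \<in> carrier_mat N N" unfolding L_def block_L_def N_def by simp
  have Uc: "U \<in> carrier_mat N N" unfolding U_def block_U_def N_def by simp
  have Ac: "A \<in> carrier_mat N N" unfolding A_def using Lc by (simp add: minus_carrier_mat)
  have Lij: "L $$ (r,c) = (if c div n < r div n then B (c div n) $$ (r mod n, c mod n) else 0)"
    if "r < N" "c < N" for r c using that unfolding L_def block_L_def N_def by simp
  have Uij: "U $$ (r,c) = (if r div n \<le> c div n then B (c div n) $$ (r mod n, c mod n) else 0)"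
    if "r < N" "c < N" for r c using that unfolding U_def block_U_def N_def by simp
  have "det A = prod_list (diag_mat A)"
  proof (rule det_lower_triangular[OF _ Ac])
    fix i j assume "i < j" "j < N"
    moreover then have "\<not> j div n < i div n" by (meson div_le_mono leD less_imp_le)
    ultimately show "A $$ (i,j) = 0" unfolding A_def using Lc Lij by auto
  qed
  also have "diag_mat A = map (\<lambda>_. 1) [0..<N]"
    unfolding diag_mat_def using Ac Lc Lij by (auto simp: A_def)
  finally have "det A = 1" by (simp add: map_replicate_const prod_list_replicate)
  then have "A \<in> Units (ring_mat TYPE(real) N ())" using det_non_zero_imp_unit[OF Ac] by simp
  then obtain X where Xc: "X \<in> carrier_mat N N" and XA: "X * A = 1\<^sub>m N" and AX: "A * X = 1\<^sub>m N"
    unfolding Units_def ring_mat_def by auto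
  have ex: "\<exists>X. X \<in> carrier_mat N N \<and> inverts_mat A X \<and> inverts_mat X A"
    using Xc XA AX Ac Xc unfolding inverts_mat_def by (intro exI[of _ X]) auto
  define Y where "Y = mat_inv N A"
  have Yc: "Y \<in> carrier_mat N N" and AY: "A * Y = 1\<^sub>m N"
    using someI_ex[OF ex] Ac unfolding Y_def mat_inv_def inverts_mat_def by auto
  define T where "T = Y * U"
  have TT: "iter_mat n d B = T" unfolding T_def Y_def iter_mat_def A_def L_def U_def N_def by simp
  have Tc: "T \<in> carrier_mat N N" unfolding T_def using Yc Uc by simp
  have "A * T = U" unfolding T_def using AY Ac Yc Uc
    by (metis assoc_mult_mat left_mult_one_mat)
  then have "T - L * T = U" unfolding A_def using Lc Tc
    by (simp add: minus_mult_distrib_mat[of _ N N])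
  then have Teq: "T $$ (r,c) = (\<Sum>k<N. L $$ (r,k) * T $$ (k,c)) + U $$ (r,c)" if "r<N" "c<N" for r c
  proof -
    have "(T - L * T) $$ (r,c) = U $$ (r,c)" using \<open>T - L * T = U\<close> by simp
    then show ?thesis using that Lc Tc
      by (auto simp: index_mult_mat scalar_prod_def row_def col_def atLeast0LessThan)
  qed
  define W where "W r c = B (c div n) $$ (r mod n, c mod n)" for r c
  have LUW: "\<bar>L $$ (r,c)\<bar> + \<bar>U $$ (r,c)\<bar> = \<bar>W r c\<bar>" if "r<N" "c<N" for r c
    using Lij[OF that] Uij[OF that] unfolding W_def by auto
  define rs where "rs a = (\<Sum>j<n. \<bar>BJ $$ (a,j)\<bar>)" for a
  have sumW: "(\<Sum>c<N. \<bar>W r c\<bar>) = rs (r mod n)" for r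
  proof -
    have "(\<Sum>c<N. \<bar>W r c\<bar>) = (\<Sum>p<d. \<Sum>j<n. \<bar>W r (p*n+j)\<bar>)"
      unfolding N_def by (rule sum_blocks)
    also have "\<dots> = (\<Sum>p<d. \<Sum>j<n. \<bar>B p $$ (r mod n, j)\<bar>)"
      unfolding W_def by (intro sum.cong refl) auto
    also have "\<dots> = (\<Sum>j<n. \<Sum>p<d. \<bar>B p $$ (r mod n, j)\<bar>)" by (rule sum.swap)
    also have "\<dots> = rs (r mod n)" unfolding rs_def
    proof (intro sum.cong refl)
      fix j assume "j \<in> {..<n}"
      then show "(\<Sum>p<d. \<bar>B p $$ (r mod n, j)\<bar>) = \<bar>BJ $$ (r mod n, j)\<bar>"
        using sum_abs_disj[of d "\<lambda>p. B p $$ (r mod n, j)"] dis BJs n0 by simp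
    qed
    finally show ?thesis .
  qed
  define \<alpha> where "\<alpha> = norm_inf BJ"
  have \<alpha>def: "\<alpha> = Max (rs ` {..<n})" unfolding \<alpha>_def norm_inf_def rs_def using BJc by simp
  have rsle: "rs a \<le> \<alpha>" if "a < n" for a unfolding \<alpha>def using that by simp
  have "Max (rs ` {..<n}) \<in> rs ` {..<n}" using n0 by (intro Max_in) auto
  then obtain a0 where a0: "a0 < n" "\<alpha> = rs a0" using \<alpha>def by auto
  have \<alpha>0: "\<alpha> \<ge> 0" using a0 unfolding rs_def by (simp add: sum_nonneg)
  define m where "m = max 1 \<alpha>"
  have m1: "m \<ge> 1" unfolding m_def by simp
  define Sr where "Sr r = (\<Sum>c<N. \<bar>T $$ (r,c)\<bar>)" for r
  have normT: "norm_inf T = Max (Sr ` {..<N})" unfolding norm_inf_def Sr_def using Tc by simp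
  have bound: "r < N \<longrightarrow> Sr r \<le> \<alpha> * m ^ (r div n)" for r
  proof (induction r rule: less_induct)
    case (less r)
    show ?case
    proof
      assume rN: "r < N"
      let ?i = "r div n"
      have mi: "m ^ ?i \<ge> 1" using m1 by simp
      have IHk: "\<bar>L $$ (r,k)\<bar> * Sr k \<le> \<bar>L $$ (r,k)\<bar> * m ^ ?i" if "k < N" for k
      proof (cases "k div n < ?i")
        case True
        then have "k < r" by (meson div_le_mono not_le)
        then have "Sr k \<le> \<alpha> * m ^ (k div n)" using less that by simp
        also have "\<dots> \<le> m * m ^ (k div n)" using m1 \<alpha>0 unfolding m_def
          by (intro mult_right_mono) auto
        also have "\<dots> = m ^ (Suc (k div n))" by simp
        also have "\<dots> \<le> m ^ ?i" using True m1 by (intro power_increasing) auto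
        finally show ?thesis by (simp add: mult_left_mono)
      next
        case False then show ?thesis using Lij[OF rN that] by simp
      qed
      have swp: "(\<Sum>c<N. \<Sum>k<N. \<bar>L $$ (r,k)\<bar> * \<bar>T $$ (k,c)\<bar>) = (\<Sum>k<N. \<bar>L $$ (r,k)\<bar> * Sr k)"
      proof -
        have "(\<Sum>c<N. \<Sum>k<N. \<bar>L $$ (r,k)\<bar> * \<bar>T $$ (k,c)\<bar>) = (\<Sum>k<N. \<Sum>c<N. \<bar>L $$ (r,k)\<bar> * \<bar>T $$ (k,c)\<bar>)"
          by (rule sum.swap)
        also have "\<dots> = (\<Sum>k<N. \<bar>L $$ (r,k)\<bar> * Sr k)"
          unfolding Sr_def by (simp only: sum_distrib_left)
        finally show ?thesis .
      qed
      have "Sr r \<le> (\<Sum>c<N. (\<Sum>k<N. \<bar>L $$ (r,k)\<bar> * \<bar>T $$ (k,c)\<bar>) + \<bar>U $$ (r,c)\<bar>)"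
        unfolding Sr_def
      proof (rule sum_mono)
        fix c assume "c \<in> {..<N}"
        then have "\<bar>T $$ (r,c)\<bar> = \<bar>(\<Sum>k<N. L $$ (r,k) * T $$ (k,c)) + U $$ (r,c)\<bar>"
          using Teq rN by simp
        also have "\<dots> \<le> \<bar>\<Sum>k<N. L $$ (r,k) * T $$ (k,c)\<bar> + \<bar>U $$ (r,c)\<bar>" by (rule abs_triangle_ineq)
        also have "\<bar>\<Sum>k<N. L $$ (r,k) * T $$ (k,c)\<bar> \<le> (\<Sum>k<N. \<bar>L $$ (r,k) * T $$ (k,c)\<bar>)" by (rule sum_abs)
        finally show "\<bar>T $$ (r,c)\<bar> \<le> (\<Sum>k<N. \<bar>L $$ (r,k)\<bar> * \<bar>T $$ (k,c)\<bar>) + \<bar>U $$ (r,c)\<bar>"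
          by (simp add: abs_mult)
      qed
      also have "\<dots> = (\<Sum>c<N. \<Sum>k<N. \<bar>L $$ (r,k)\<bar> * \<bar>T $$ (k,c)\<bar>) + (\<Sum>c<N. \<bar>U $$ (r,c)\<bar>)"
        by (rule sum.distrib)
      also have "\<dots> = (\<Sum>k<N. \<bar>L $$ (r,k)\<bar> * Sr k) + (\<Sum>c<N. \<bar>U $$ (r,c)\<bar>)"
        by (simp only: swp)
      also have "\<dots> \<le> (\<Sum>k<N. \<bar>L $$ (r,k)\<bar> * m ^ ?i) + (\<Sum>c<N. \<bar>U $$ (r,c)\<bar> * m ^ ?i)"
        using IHk mi by (intro add_mono sum_mono) (auto simp: mult_le_cancel_left1)
      also have "\<dots> = m ^ ?i * (\<Sum>c<N. \<bar>L $$ (r,c)\<bar> + \<bar>U $$ (r,c)\<bar>)"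
        by (simp add: sum.distrib sum_distrib_left mult.commute distrib_left)
      also have "\<dots> = m ^ ?i * rs (r mod n)"
      proof -
        have "(\<Sum>c<N. \<bar>L $$ (r,c)\<bar> + \<bar>U $$ (r,c)\<bar>) = (\<Sum>c<N. \<bar>W r c\<bar>)"
          using LUW rN by (intro sum.cong refl) auto
        then show ?thesis using sumW by simp
      qed
      also have "\<dots> \<le> m ^ ?i * \<alpha>" using rsle n0 mi by (intro mult_left_mono) auto
      finally show "Sr r \<le> \<alpha> * m ^ ?i" by (simp add: mult.commute)
    qed
  qed
  have lower: "\<alpha> \<le> norm_inf T"
  proof -
    have a0N: "a0 < N" using a0 d1 unfolding N_def
      by (metis le_trans less_le_trans mult_1 mult_le_mono1 order.refl)
    have "Sr a0 = (\<Sum>c<N. \<bar>W a0 c\<bar>)" unfolding Sr_def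
    proof (intro sum.cong refl)
      fix c assume c: "c \<in> {..<N}"
      have "a0 div n = 0" using a0 by simp
      then have "T $$ (a0,c) = U $$ (a0, c)" using Teq[OF a0N] c Lij[OF a0N] by simp
      then show "\<bar>T $$ (a0,c)\<bar> = \<bar>W a0 c\<bar>" using Uij[OF a0N] c \<open>a0 div n = 0\<close> unfolding W_def by simp
    qed
    also have "\<dots> = \<alpha>" using sumW a0 by simp
    finally show ?thesis unfolding normT using a0N by (metis Max_ge finite_imageI finite_lessThan imageI lessThan_iff)
  qed
  have "Max (Sr ` {..<N}) \<in> Sr ` {..<N}" using N0 by (intro Max_in) auto
  then obtain r0 where r0: "r0 < N" "norm_inf T = Sr r0" using normT by auto
  have "norm_inf T \<le> \<alpha> * m ^ (r0 div n)" using bound r0 by simp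
  also have "\<dots> \<le> \<alpha> * m ^ (d - 1)"
  proof -
    have "r0 div n < d" using r0 unfolding N_def by (simp add: less_mult_imp_div_less)
    then show ?thesis using m1 \<alpha>0 by (intro mult_left_mono power_increasing) auto
  qed
  finally have upper: "norm_inf T \<le> \<alpha> * m ^ (d - 1)" .
  show ?thesis
  proof (intro conjI impI)
    assume "norm_inf BJ \<le> 1"
    then have "m = 1" unfolding m_def \<alpha>_def by simp
    then show "norm_inf (iter_mat n d B) = norm_inf BJ" using upper lower TT \<alpha>_def by simp
  next
    assume "norm_inf BJ > 1"
    then show "norm_inf BJ \<le> norm_inf (iter_mat n d B)" using lower TT \<alpha>_def by simp
  next
    assume "norm_inf BJ > 1"
    then have "m = \<alpha>" unfolding m_def \<alpha>_def by simp
    then have "\<alpha> * m ^ (d - 1) = \<alpha> ^ d" using d1 by (metis Suc_diff_le diff_Suc_1 power_Suc)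
    then show "norm_inf (iter_mat n d B) \<le> norm_inf BJ ^ d" using upper TT \<alpha>_def by simp
  qed
qed
end
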